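(* Let $d \geq 3$ and $1 \leq r < \frac d2$ be integers and let $f_{d,r}(x) = f_{d,r}(x;q) := \sum_{\lambda} x^{\ell(\lambda)} q^{|\lambda|}$, where the sum runs over all partitions $\lambda$ (including the empty partition) such that every part is congruent to $0, \pm r \pmod d$, consecutive parts satisfy $\lambda_i - \lambda_{i+1} \geq d$, and $\lambda_i - \lambda_{i+1} > d$ whenever $d \mid \lambda_i$; here $\ell(\lambda)$ is the number of parts and $|\lambda|$ the sum of the parts. Then, as formal power series in $x$ and $q$, \[ f_{d,r}(x) = \left(1 + xq^r + xq^{d-r}\right) f_{d,r}\left(xq^d\right) + xq^d\left(1 - xq^d\right) f_{d,r}\left(xq^{2d}\right). \] *)

theory Defs
  imports "HOL-Computational_Algebra.Formal_Power_Series"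
begin

text \<open>A partition is a list of positive parts in (weakly) decreasing order; here the
difference conditions force strict decrease. ps ! 0 is the largest part.\<close>
definition dr_partition :: "nat \<Rightarrow> nat \<Rightarrow> nat list \<Rightarrow> bool" where
  "dr_partition d r ps \<longleftrightarrow>
     (\<forall>p\<in>set ps. 0 < p \<and> (p mod d = 0 \<or> p mod d = r \<or> p mod d = d - r)) \<and>
     (\<forall>i. Suc i < length ps \<longrightarrow>
        ps ! Suc i + d \<le> ps ! i \<and> (d dvd ps ! i \<longrightarrow> ps ! Suc i + d < ps ! i))"

definition dr_count :: "nat \<Rightarrow> nat \<Rightarrow> nat \<Rightarrow> nat \<Rightarrow> nat" where
  "dr_count d r n m = card {ps. dr_partition d r ps \<and> length ps = n \<and> sum_list ps = m}"

text \<open>f_{d,r}(x;q) as a power series in x whose coefficients are power series in q.\<close>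
definition f_dr :: "nat \<Rightarrow> nat \<Rightarrow> int fps fps" where
  "f_dr d r = Abs_fps (\<lambda>n. Abs_fps (\<lambda>m. int (dr_count d r n m)))"

text \<open>Substitution x \<mapsto> x q^c.\<close>
definition x_scale :: "nat \<Rightarrow> int fps fps \<Rightarrow> int fps fps" where
  "x_scale c F = Abs_fps (\<lambda>n. fps_X ^ (c * n) * fps_nth F n)"

abbreviation qvar :: "int fps fps" where
  "qvar \<equiv> fps_const fps_X"

end

theory Submission
  imports Defs
begin

unbundle fps_syntax


definition VV :: "nat \<Rightarrow> nat \<Rightarrow> nat \<Rightarrow> bool" where
  "VV d r p \<longleftrightarrow> 0 < p \<and> (p mod d = 0 \<or> p mod d = r \<or> p mod d = d - r)"

definition OK :: "nat \<Rightarrow> nat \<Rightarrow> nat \<Rightarrow> bool" where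
  "OK d a b \<longleftrightarrow> b + d \<le> a \<and> (d dvd a \<longrightarrow> b + d < a)"

lemma drp_alt: "dr_partition d r ps \<longleftrightarrow> (\<forall>p\<in>set ps. VV d r p) \<and>
   (\<forall>i. Suc i < length ps \<longrightarrow> OK d (ps ! i) (ps ! Suc i))"
  unfolding dr_partition_def VV_def OK_def by blast

lemma drp_snoc: "dr_partition d r (xs @ [s]) \<longleftrightarrow> dr_partition d r xs \<and> VV d r s \<and>
   (xs \<noteq> [] \<longrightarrow> OK d (last xs) s)"
proof -
  have "(\<forall>i. Suc i < length (xs@[s]) \<longrightarrow> OK d ((xs@[s]) ! i) ((xs@[s]) ! Suc i)) \<longleftrightarrow>
        (\<forall>i. Suc i < length xs \<longrightarrow> OK d (xs ! i) (xs ! Suc i)) \<and> (xs \<noteq> [] \<longrightarrow> OK d (last xs) s)"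
  proof (intro iffI conjI impI allI)
    fix i assume H: "\<forall>i. Suc i < length (xs@[s]) \<longrightarrow> OK d ((xs@[s]) ! i) ((xs@[s]) ! Suc i)"
      and i: "Suc i < length xs"
    from H[rule_format, of i] i show "OK d (xs ! i) (xs ! Suc i)" by (simp add: nth_append)
  next
    assume H: "\<forall>i. Suc i < length (xs@[s]) \<longrightarrow> OK d ((xs@[s]) ! i) ((xs@[s]) ! Suc i)"
      and ne: "xs \<noteq> []"
    from H[rule_format, of "length xs - 1"] ne show "OK d (last xs) s"
      by (simp add: nth_append last_conv_nth)
  next
    fix i assume H: "(\<forall>i. Suc i < length xs \<longrightarrow> OK d (xs ! i) (xs ! Suc i)) \<and> (xs \<noteq> [] \<longrightarrow> OK d (last xs) s)"
      and i: "Suc i < length (xs@[s])"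
    show "OK d ((xs@[s]) ! i) ((xs@[s]) ! Suc i)"
    proof (cases "Suc i < length xs")
      case True thus ?thesis using H by (simp add: nth_append)
    next
      case False
      hence e: "i = length xs - 1" "xs \<noteq> []" using i by auto
      thus ?thesis using H by (auto simp: nth_append last_conv_nth)
    qed
  qed
  thus ?thesis unfolding drp_alt by auto
qed

lemma drp_decr:
  assumes "dr_partition d r xs" "0 < d" "j < length xs" "i < j"
  shows "xs ! j < xs ! i"
  using assms(3,4)
proof (induction j)
  case 0 thus ?case by simp
next
  case (Suc j)
  have "OK d (xs ! j) (xs ! Suc j)" using assms(1) Suc.prems unfolding drp_alt by blast
  hence a: "xs ! Suc j < xs ! j" using assms(2) unfolding OK_def by linarith
  show ?case
  proof (cases "i = j")
    case True thus ?thesis using a by simp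
  next
    case False thus ?thesis using Suc a by (meson Suc_lessD less_SucE order.strict_trans)
  qed
qed

lemma drp_last_le:
  assumes "dr_partition d r xs" "0 < d" "p \<in> set xs"
  shows "last xs \<le> p"
proof -
  obtain i where i: "i < length xs" "p = xs ! i" using assms(3) by (metis in_set_conv_nth)
  have ne: "xs \<noteq> []" using assms(3) by auto
  have "last xs = xs ! (length xs - 1)" using ne by (simp add: last_conv_nth)
  moreover have "i \<le> length xs - 1" using i by simp
  ultimately show ?thesis using drp_decr[OF assms(1,2), of "length xs - 1" i] i
    by (cases "i = length xs - 1") (use ne in \<open>auto intro: less_imp_le\<close>)
qed

lemma drp_shift:
  assumes "d dvd k" "\<forall>p\<in>set xs. 0 < p"
  shows "dr_partition d r (map (\<lambda>p. p + k) xs) \<longleftrightarrow> dr_partition d r xs"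
proof -
  have m: "(p + k) mod d = p mod d" for p using assms(1) by (metis dvd_imp_mod_0 mod_add_right_eq add_0_right)
  have v: "d dvd (p + k) \<longleftrightarrow> d dvd p" for p using assms(1) by (simp add: dvd_add_left_iff)
  show ?thesis unfolding dr_partition_def using assms(2) by (auto simp: m v)
qed

lemma sum_shift: "sum_list (map (\<lambda>p. p + k) xs) = sum_list xs + k * length xs"
  by (induction xs) auto

lemma sum_ge: "\<forall>p\<in>set xs. k \<le> p \<Longrightarrow> k * length xs \<le> sum_list xs"
  by (induction xs) auto


context
  fixes d r :: nat
  assumes d3: "d \<ge> 3" and r1: "1 \<le> r" and r2: "2 * r < d"
begin

definition "SS n m = {ps. dr_partition d r ps \<and> length ps = n \<and> sum_list ps = m}"
definition "TT k n m = {ps \<in> SS n m. \<forall>p\<in>set ps. k < p}"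
definition "LL s n m = {ps \<in> SS n m. ps \<noteq> [] \<and> last ps = s}"

lemma SS_fin: "finite (SS n m)"
proof (rule finite_subset)
  show "SS n m \<subseteq> {xs. set xs \<subseteq> {0..m} \<and> length xs = n}"
    unfolding SS_def by (auto simp: member_le_sum_list)
  show "finite {xs. set xs \<subseteq> {0..m} \<and> length xs = n}" by (rule finite_lists_length_eq) simp
qed

lemma count_SS: "dr_count d r n m = card (SS n m)"
  unfolding dr_count_def SS_def by simp

lemma SS_pos: "ps \<in> SS n m \<Longrightarrow> p \<in> set ps \<Longrightarrow> 0 < p"
  unfolding SS_def dr_partition_def by auto

lemma TT_img:
  assumes "d dvd k" "k * n \<le> m"
  shows "TT k n m = map (\<lambda>p. p + k) ` SS n (m - k * n)"
proof
  show "TT k n m \<subseteq> map (\<lambda>p. p + k) ` SS n (m - k * n)"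
  proof
    fix ps assume ps: "ps \<in> TT k n m"
    let ?mu = "map (\<lambda>p. p - k) ps"
    have h: "\<forall>x\<in>set ps. k < x" using ps unfolding TT_def by auto
    have e0: "map (\<lambda>p. p + k) ?mu = ps" unfolding map_map o_def by (rule map_idI) (use h in auto)
    hence e: "ps = map (\<lambda>p. p + k) ?mu" by simp
    have pos: "\<forall>p\<in>set ?mu. 0 < p" using ps unfolding TT_def by auto
    have "dr_partition d r ?mu" using drp_shift[OF assms(1) pos] e ps unfolding TT_def SS_def by auto
    moreover have "length ?mu = n" using ps unfolding TT_def SS_def by auto
    moreover have "sum_list ?mu = m - k * n"
    proof -
      have "sum_list ps = sum_list ?mu + k * length ?mu" using sum_shift[of k ?mu] e0 by simp
      moreover have "sum_list ps = m" "length ps = n" using ps unfolding TT_def SS_def by auto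
      ultimately show ?thesis by simp
    qed
    ultimately have "?mu \<in> SS n (m - k * n)" unfolding SS_def by auto
    thus "ps \<in> map (\<lambda>p. p + k) ` SS n (m - k * n)" using e by blast
  qed
next
  show "map (\<lambda>p. p + k) ` SS n (m - k * n) \<subseteq> TT k n m"
  proof
    fix ps assume "ps \<in> map (\<lambda>p. p + k) ` SS n (m - k * n)"
    then obtain mu where mu: "mu \<in> SS n (m - k * n)" "ps = map (\<lambda>p. p + k) mu" by blast
    have pos: "\<forall>p\<in>set mu. 0 < p" using SS_pos[OF mu(1)] by auto
    have "dr_partition d r ps" using drp_shift[OF assms(1) pos] mu unfolding SS_def by auto
    moreover have "sum_list ps = m" using sum_shift[of k mu] mu assms(2) unfolding SS_def by auto
    ultimately show "ps \<in> TT k n m" using mu pos unfolding TT_def SS_def by auto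
  qed
qed

lemma TT_empty:
  assumes "m < k * n" shows "TT k n m = {}"
proof (rule ccontr)
  assume "TT k n m \<noteq> {}"
  then obtain ps where ps: "ps \<in> TT k n m" by blast
  have "Suc k * length ps \<le> sum_list ps" using ps unfolding TT_def by (intro sum_ge) auto
  thus False using ps assms unfolding TT_def SS_def by auto
qed

lemma TT_card:
  assumes "d dvd k"
  shows "card (TT k n m) = (if m < k * n then 0 else card (SS n (m - k * n)))"
proof (cases "m < k * n")
  case True thus ?thesis using TT_empty by simp
next
  case False
  have "inj (map (\<lambda>p::nat. p + k))" by (simp add: inj_on_def)
  hence "card (map (\<lambda>p. p + k) ` SS n (m - k * n)) = card (SS n (m - k * n))"
    by (meson card_image inj_on_subset subset_UNIV)
  thus ?thesis using False TT_img[OF assms, of n m] by simp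
qed

lemma LL_img:
  assumes "0 < n" "s \<le> m"
  shows "LL s n m = (\<lambda>xs. xs @ [s]) ` {xs \<in> SS (n - 1) (m - s). VV d r s \<and> (xs \<noteq> [] \<longrightarrow> OK d (last xs) s)}"
proof
  show "LL s n m \<subseteq> (\<lambda>xs. xs @ [s]) ` {xs \<in> SS (n - 1) (m - s). VV d r s \<and> (xs \<noteq> [] \<longrightarrow> OK d (last xs) s)}"
  proof
    fix ps assume ps: "ps \<in> LL s n m"
    hence ne: "ps \<noteq> []" and l: "last ps = s" unfolding LL_def by auto
    have e: "ps = butlast ps @ [s]" using ne l by (metis append_butlast_last_id)
    have "dr_partition d r (butlast ps @ [s])" using ps e unfolding LL_def SS_def by auto
    hence "dr_partition d r (butlast ps) \<and> VV d r s \<and> (butlast ps \<noteq> [] \<longrightarrow> OK d (last (butlast ps)) s)"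
      using drp_snoc by blast
    moreover have "sum_list (butlast ps) = m - s"
    proof -
      have "sum_list (butlast ps @ [s]) = sum_list (butlast ps) + s" by simp
      moreover have "sum_list ps = m" using ps unfolding LL_def SS_def by simp
      ultimately show ?thesis using e by simp
    qed
    moreover have "length (butlast ps) = n - 1" using ps unfolding LL_def SS_def by auto
    ultimately show "ps \<in> (\<lambda>xs. xs @ [s]) ` {xs \<in> SS (n - 1) (m - s). VV d r s \<and> (xs \<noteq> [] \<longrightarrow> OK d (last xs) s)}"
      using e unfolding SS_def by (metis (mono_tags, lifting) image_eqI mem_Collect_eq)
  qed
next
  show "(\<lambda>xs. xs @ [s]) ` {xs \<in> SS (n - 1) (m - s). VV d r s \<and> (xs \<noteq> [] \<longrightarrow> OK d (last xs) s)} \<subseteq> LL s n m"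
  proof
    fix ps assume "ps \<in> (\<lambda>xs. xs @ [s]) ` {xs \<in> SS (n - 1) (m - s). VV d r s \<and> (xs \<noteq> [] \<longrightarrow> OK d (last xs) s)}"
    then obtain xs where xs: "xs \<in> SS (n - 1) (m - s)" "VV d r s" "xs \<noteq> [] \<longrightarrow> OK d (last xs) s" "ps = xs @ [s]"
      by blast
    have "dr_partition d r ps" using xs drp_snoc unfolding SS_def by auto
    thus "ps \<in> LL s n m" using xs assms unfolding LL_def SS_def by auto
  qed
qed

lemma LL_empty: "n = 0 \<or> m < s \<Longrightarrow> LL s n m = {}"
  unfolding LL_def SS_def by (auto simp: member_le_sum_list dest: member_le_sum_list[OF last_in_set])

lemma LL_card:
  "card (LL s n m) = (if n = 0 \<or> m < s then 0 else
     card {xs \<in> SS (n - 1) (m - s). VV d r s \<and> (xs \<noteq> [] \<longrightarrow> OK d (last xs) s)})"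
proof (cases "n = 0 \<or> m < s")
  case True thus ?thesis using LL_empty by simp
next
  case False
  have "inj (\<lambda>xs::nat list. xs @ [s])" by (simp add: inj_on_def)
  hence "card ((\<lambda>xs. xs @ [s]) ` {xs \<in> SS (n - 1) (m - s). VV d r s \<and> (xs \<noteq> [] \<longrightarrow> OK d (last xs) s)})
     = card {xs \<in> SS (n - 1) (m - s). VV d r s \<and> (xs \<noteq> [] \<longrightarrow> OK d (last xs) s)}"
    by (meson card_image inj_on_subset subset_UNIV)
  thus ?thesis using False LL_img[of n s m] by simp
qed


lemma vv_cases:
  assumes "VV d r p" "d < p"
  shows "p = d + r \<or> p = 2 * d - r \<or> 2 * d \<le> p"
proof -
  have e: "p = d * (p div d) + p mod d" by simp
  have t: "p mod d < d" using d3 by simp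
  show ?thesis
  proof (cases "p div d")
    case 0 thus ?thesis using e t assms(2) by simp
  next
    case (Suc j)
    show ?thesis
    proof (cases j)
      case 0
      hence "p = d + p mod d" using e Suc by simp
      thus ?thesis using assms unfolding VV_def by auto
    next
      case (Suc i)
      hence "d * (p div d) = 2 * d + d * i" using \<open>p div d = Suc j\<close> by (simp add: algebra_simps)
      thus ?thesis using e by linarith
    qed
  qed
qed

lemma ndvd1: "\<not> d dvd (d + r)"
proof
  assume "d dvd d + r" hence "d dvd r" by (simp add: dvd_add_right_iff)
  thus False using r1 r2 by (simp add: nat_dvd_not_less)
qed

lemma ndvd2: "\<not> d dvd (2 * d - r)"
proof
  have "2 * d - r = d + (d - r)" using r2 by simp
  moreover assume "d dvd 2 * d - r"
  ultimately have "d dvd (d - r)" by (simp add: dvd_add_right_iff)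
  thus False using r1 r2 by (simp add: nat_dvd_not_less)
qed

lemma condR:
  assumes "dr_partition d r xs"
  shows "(VV d r r \<and> (xs \<noteq> [] \<longrightarrow> OK d (last xs) r)) \<longleftrightarrow> (\<forall>p\<in>set xs. d < p)"
proof -
  have v: "VV d r r" using r1 r2 unfolding VV_def by simp
  have d0: "0 < d" using d3 by simp
  show ?thesis
  proof
    assume H: "VV d r r \<and> (xs \<noteq> [] \<longrightarrow> OK d (last xs) r)"
    show "\<forall>p\<in>set xs. d < p"
    proof
      fix p assume p: "p \<in> set xs"
      hence "xs \<noteq> []" by auto
      hence "r + d \<le> last xs" using H unfolding OK_def by auto
      thus "d < p" using drp_last_le[OF assms d0 p] r1 by linarith
    qed
  next
    assume H: "\<forall>p\<in>set xs. d < p"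
    have "OK d (last xs) r" if ne: "xs \<noteq> []"
    proof -
      have l: "last xs \<in> set xs" using ne by simp
      hence "VV d r (last xs)" using assms unfolding drp_alt by auto
      from vv_cases[OF this] H l ndvd1 r2 show ?thesis unfolding OK_def by auto
    qed
    thus "VV d r r \<and> (xs \<noteq> [] \<longrightarrow> OK d (last xs) r)" using v by auto
  qed
qed

lemma condDR:
  assumes "dr_partition d r xs"
  shows "(VV d r (d - r) \<and> (xs \<noteq> [] \<longrightarrow> OK d (last xs) (d - r))) \<longleftrightarrow>
     (\<forall>p\<in>set xs. d < p) \<and> (xs \<noteq> [] \<longrightarrow> last xs \<noteq> d + r)"
proof -
  have v: "VV d r (d - r)" using r1 r2 unfolding VV_def by simp
  have d0: "0 < d" using d3 by simp
  show ?thesis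
  proof
    assume H: "VV d r (d - r) \<and> (xs \<noteq> [] \<longrightarrow> OK d (last xs) (d - r))"
    have a: "xs \<noteq> [] \<Longrightarrow> d - r + d \<le> last xs" using H unfolding OK_def by auto
    show "(\<forall>p\<in>set xs. d < p) \<and> (xs \<noteq> [] \<longrightarrow> last xs \<noteq> d + r)"
    proof (intro conjI ballI impI)
      fix p assume p: "p \<in> set xs"
      hence "xs \<noteq> []" by auto
      thus "d < p" using a drp_last_le[OF assms d0 p] r2 by fastforce
    next
      assume "xs \<noteq> []" thus "last xs \<noteq> d + r" using a r2 by fastforce
    qed
  next
    assume H: "(\<forall>p\<in>set xs. d < p) \<and> (xs \<noteq> [] \<longrightarrow> last xs \<noteq> d + r)"
    have "OK d (last xs) (d - r)" if ne: "xs \<noteq> []"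
    proof -
      have l: "last xs \<in> set xs" using ne by simp
      hence "VV d r (last xs)" using assms unfolding drp_alt by auto
      from vv_cases[OF this] H l have c: "last xs = 2 * d - r \<or> 2 * d \<le> last xs" using ne by auto
      show ?thesis using c ndvd2 r1 r2 unfolding OK_def by (elim disjE) auto
    qed
    thus "VV d r (d - r) \<and> (xs \<noteq> [] \<longrightarrow> OK d (last xs) (d - r))" using v by auto
  qed
qed

lemma condD:
  assumes "dr_partition d r xs"
  shows "(VV d r d \<and> (xs \<noteq> [] \<longrightarrow> OK d (last xs) d)) \<longleftrightarrow> (\<forall>p\<in>set xs. 2 * d < p)"
proof -
  have v: "VV d r d" using d3 unfolding VV_def by simp
  have d0: "0 < d" using d3 by simp
  show ?thesis
  proof
    assume H: "VV d r d \<and> (xs \<noteq> [] \<longrightarrow> OK d (last xs) d)"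
    show "\<forall>p\<in>set xs. 2 * d < p"
    proof
      fix p assume p: "p \<in> set xs"
      hence "xs \<noteq> []" by auto
      hence o: "OK d (last xs) d" using H by auto
      have "2 * d < last xs"
      proof (rule ccontr)
        assume "\<not> 2 * d < last xs"
        hence "last xs = 2 * d" using o unfolding OK_def by auto
        thus False using o unfolding OK_def by auto
      qed
      thus "2 * d < p" using drp_last_le[OF assms d0 p] by linarith
    qed
  next
    assume H: "\<forall>p\<in>set xs. 2 * d < p"
    have "OK d (last xs) d" if ne: "xs \<noteq> []"
    proof -
      have "2 * d < last xs" using H ne by simp
      thus ?thesis unfolding OK_def by linarith
    qed
    thus "VV d r d \<and> (xs \<noteq> [] \<longrightarrow> OK d (last xs) d)" using v by auto
  qed
qed

lemma card_LLr: "card (LL r n m) = (if n = 0 \<or> m < r then 0 else card (TT d (n - 1) (m - r)))"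
  unfolding LL_card TT_def using condR unfolding SS_def
  by (smt (verit, best) Collect_cong mem_Collect_eq)

lemma card_LLd: "card (LL d n m) = (if n = 0 \<or> m < d then 0 else card (TT (2 * d) (n - 1) (m - d)))"
  unfolding LL_card TT_def using condD unfolding SS_def
  by (smt (verit, best) Collect_cong mem_Collect_eq)

lemma card_LLdr: "card (LL (d - r) n m) = (if n = 0 \<or> m < d - r then 0 else
    card {xs \<in> TT d (n - 1) (m - (d - r)). xs \<noteq> [] \<longrightarrow> last xs \<noteq> d + r})"
  unfolding LL_card TT_def using condDR unfolding SS_def
  by (smt (verit, best) Collect_cong mem_Collect_eq)


lemma card_filt: "card {xs \<in> TT d n m. xs \<noteq> [] \<longrightarrow> last xs \<noteq> d + r} +
   (if m < d * n then 0 else card (LL r n (m - d * n))) = card (TT d n m)"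
proof -
  let ?A = "{xs \<in> TT d n m. xs \<noteq> [] \<longrightarrow> last xs \<noteq> d + r}"
  let ?B = "{xs \<in> TT d n m. xs \<noteq> [] \<and> last xs = d + r}"
  have fin: "finite (TT d n m)" using SS_fin unfolding TT_def by simp
  have u: "TT d n m = ?A \<union> ?B" by auto
  have "card (TT d n m) = card ?A + card ?B"
    by (subst u, rule card_Un_disjoint) (use fin in auto)
  moreover have "card ?B = (if m < d * n then 0 else card (LL r n (m - d * n)))"
  proof (cases "m < d * n")
    case True thus ?thesis using TT_empty by simp
  next
    case False
    hence "TT d n m = map (\<lambda>p. p + d) ` SS n (m - d * n)" using TT_img by simp
    hence "?B = map (\<lambda>p. p + d) ` LL r n (m - d * n)" unfolding LL_def
      by (auto simp: last_map)
    moreover have "inj (map (\<lambda>p::nat. p + d))" by (simp add: inj_on_def)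
    moreover have "card (map (\<lambda>p. p + d) ` LL r n (m - d * n)) = card (LL r n (m - d * n))"
      using calculation(2) by (meson card_image inj_on_subset subset_UNIV)
    ultimately show ?thesis using False by simp
  qed
  ultimately show ?thesis by simp
qed

lemma decomp: "card (SS n m) = card (TT d n m) + card (LL r n m) + card (LL (d - r) n m) + card (LL d n m)"
proof -
  have fin: "finite (SS n m)" by (rule SS_fin)
  have u: "SS n m = TT d n m \<union> LL r n m \<union> LL (d - r) n m \<union> LL d n m"
  proof
    show "SS n m \<subseteq> TT d n m \<union> LL r n m \<union> LL (d - r) n m \<union> LL d n m"
    proof
      fix ps assume ps: "ps \<in> SS n m"
      show "ps \<in> TT d n m \<union> LL r n m \<union> LL (d - r) n m \<union> LL d n m"
      proof (cases "ps = []")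
        case True thus ?thesis using ps unfolding TT_def by auto
      next
        case False
        have l: "last ps \<in> set ps" using False by simp
        have dp: "dr_partition d r ps" using ps unfolding SS_def by simp
        hence v: "VV d r (last ps)" using l unfolding drp_alt by auto
        show ?thesis
        proof (cases "d < last ps")
          case True
          hence "\<forall>p\<in>set ps. d < p" using drp_last_le[OF dp] d3 by fastforce
          thus ?thesis using ps unfolding TT_def by auto
        next
          case F: False
          have "last ps = r \<or> last ps = d - r \<or> last ps = d"
          proof (cases "last ps = d")
            case False
            hence "last ps < d" using F by simp
            hence "last ps mod d = last ps" by simp
            thus ?thesis using v unfolding VV_def by auto
          qed simp
          thus ?thesis using ps False unfolding LL_def by auto
        qed
      qed
    qed
  qed (auto simp: TT_def LL_def)
  have disT: "TT d n m \<inter> LL s n m = {}" if "s \<le> d" for s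
  proof (rule ccontr)
    assume "TT d n m \<inter> LL s n m \<noteq> {}"
    then obtain ps where "ps \<in> TT d n m" "ps \<in> LL s n m" by blast
    hence "d < last ps" "last ps = s" unfolding TT_def LL_def by auto
    thus False using that by simp
  qed
  have disL: "LL s n m \<inter> LL t n m = {}" if "s \<noteq> t" for s t
    using that unfolding LL_def by auto
  have fT: "finite (TT d n m)" and fL: "finite (LL s n m)" for s
    using fin unfolding TT_def LL_def by auto
  have ne: "r \<noteq> d - r" "r \<noteq> d" "d - r \<noteq> d" using r1 r2 by auto
  have c1: "card (TT d n m \<union> LL r n m) = card (TT d n m) + card (LL r n m)"
    by (rule card_Un_disjoint) (use fT fL disT r2 in auto)
  have c2: "card (TT d n m \<union> LL r n m \<union> LL (d - r) n m) = card (TT d n m \<union> LL r n m) + card (LL (d - r) n m)"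
    by (rule card_Un_disjoint) (use fT fL disT[of "d - r"] disL ne in \<open>auto simp: Int_Un_distrib2\<close>)
  have c3: "card (TT d n m \<union> LL r n m \<union> LL (d - r) n m \<union> LL d n m) =
     card (TT d n m \<union> LL r n m \<union> LL (d - r) n m) + card (LL d n m)"
    by (rule card_Un_disjoint) (use fT fL disT[of d] disL ne in \<open>auto simp: Int_Un_distrib2\<close>)
  show ?thesis using u c1 c2 c3 by simp
qed
end



context
  fixes d r :: nat
  assumes d3: "d \<ge> 3" and r1: "1 \<le> r" and r2: "2 * r < d"
begin

abbreviation "CC n m \<equiv> int (dr_count d r n m)"

lemma Tc: "d dvd k \<Longrightarrow> int (card (TT d r k n m)) = (if m < k * n then 0 else CC n (m - k * n))"
  using TT_card[OF d3 r1 r2] count_SS[OF d3 r1 r2] by simp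

lemma Lrc: "int (card (LL d r r (Suc k) m)) = (if m < r + d * k then 0 else CC k (m - r - d * k))"
  using card_LLr[OF d3 r1 r2, of "Suc k" m] Tc[of d k "m - r"] by auto

lemma Ldc: "int (card (LL d r d (Suc k) m)) = (if m < d + 2 * d * k then 0 else CC k (m - d - 2 * d * k))"
  using card_LLd[OF d3 r1 r2, of "Suc k" m] Tc[of "2 * d" k "m - d"] by (auto simp: mult.assoc)

lemma Ldrc: "int (card (LL d r (d - r) (Suc k) m)) = (if m < d - r + d * k then 0 else CC k (m - (d - r) - d * k)
   - (if k = 0 then 0 else if m < 2 * d + 2 * d * (k - 1) then 0 else CC (k - 1) (m - 2 * d - 2 * d * (k - 1))))"
proof (cases "m < d - r")
  case True thus ?thesis using card_LLdr[OF d3 r1 r2, of "Suc k" m] r2 by (cases k) auto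
next
  case False
  let ?m = "m - (d - r)"
  have a: "int (card (LL d r (d - r) (Suc k) m)) = int (card (TT d r d k ?m)) - int (if ?m < d * k then 0 else card (LL d r r k (?m - d * k)))"
    using card_LLdr[OF d3 r1 r2, of "Suc k" m] card_filt[OF d3 r1 r2, of k ?m] False by simp
  show ?thesis
  proof (cases k)
    case 0
    thus ?thesis using a Tc[of d k ?m] False card_LLr[OF d3 r1 r2, of 0] by simp
  next
    case (Suc j)
    have b: "int (card (LL d r r k (?m - d * k))) = (if ?m - d * k < r + d * j then 0 else CC j (?m - d * k - r - d * j))"
      using Lrc Suc by simp
    have dk: "d * k = d + d * j" using Suc by simp
    have m2: "2 * d * j = 2 * (d * j)" by simp
    have e1: "?m < d * k \<longleftrightarrow> m < d - r + d * k" using False by linarith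
    have e2: "\<not> ?m < d * k \<Longrightarrow> (?m - d * k < r + d * j \<longleftrightarrow> m < 2 * d + 2 * d * j)"
      using dk m2 r2 False by linarith
    have e3: "\<not> ?m < d * k \<Longrightarrow> ?m - d * k - r - d * j = m - 2 * d - 2 * d * j"
      using dk m2 r2 False by linarith
    have e4: "k - 1 = j" "k \<noteq> 0" using Suc by auto
    have t: "int (card (TT d r d k ?m)) = (if ?m < d * k then 0 else CC k (?m - d * k))"
      using Tc[of d k ?m] by simp
    show ?thesis
    proof (cases "?m < d * k")
      case True thus ?thesis using a t e1 by simp
    next
      case F: False
      show ?thesis unfolding e4(1) using e4(2) a t b e1 e2[OF F] e3[OF F] F by simp
    qed
  qed
qed

lemma key:
 "CC n m = (if m < d*n then 0 else CC n (m - d*n))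
   + (if n = 0 then 0 else if m < r + d*(n-1) then 0 else CC (n-1) (m - r - d*(n-1)))
   + (if n = 0 then 0 else if m < (d-r) + d*(n-1) then 0 else CC (n-1) (m - (d-r) - d*(n-1)))
   + (if n = 0 then 0 else if m < d + 2*d*(n-1) then 0 else CC (n-1) (m - d - 2*d*(n-1)))
   - (if n = 0 then 0 else if n - 1 = 0 then 0 else if m < 2*d + 2*d*(n-1-1) then 0 else CC (n-1-1) (m - 2*d - 2*d*(n-1-1)))"
proof -
  have D: "CC n m = int (card (TT d r d n m)) + int (card (LL d r r n m)) + int (card (LL d r (d - r) n m)) + int (card (LL d r d n m))"
    using decomp[OF d3 r1 r2, of n m] count_SS[OF d3 r1 r2] by simp
  show ?thesis
  proof (cases n)
    case 0
    thus ?thesis using D Tc[of d 0 m] card_LLr[OF d3 r1 r2, of 0 m] card_LLd[OF d3 r1 r2, of 0 m]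
      card_LLdr[OF d3 r1 r2, of 0 m] by simp
  next
    case (Suc k)
    show ?thesis
    proof (cases k)
      case 0
      thus ?thesis using Suc D Tc[of d n m] Lrc[of k m] Ldc[of k m] Ldrc[of k m] by simp
    next
      case (Suc j)
      have e: "2 * d + 2 * d * (k - 1) = 2 * d + 2 * d * j" using Suc by simp
      have m2: "2 * d * j = 2 * (d * j)" "d * k = d + d * j" using Suc by simp_all
      have "d - r + d * k < 2 * d + 2 * d * j" using m2 r1 r2 by linarith
      thus ?thesis using Suc \<open>n = Suc k\<close> D Tc[of d n m] Lrc[of k m] Ldc[of k m] Ldrc[of k m] e
        by (auto simp del: of_nat_add)
    qed
  qed
qed

end

lemma if_nth: "(if P then a else b) $ m = (if P then a $ m else b $ m)" by simp

lemma f_nth: "f_dr d r $ n $ m = int (dr_count d r n m)"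
  unfolding f_dr_def by simp

lemma xs_nth: "x_scale c F $ n $ m = (if m < c * n then 0 else F $ n $ (m - c * n))"
  unfolding x_scale_def by (simp add: fps_X_power_mult_nth)

lemma cxs_nth: "(fps_const (fps_X ^ k) * x_scale c F) $ n $ m = (if m < k + c * n then 0 else F $ n $ (m - k - c * n))"
  unfolding x_scale_def by (simp add: fps_X_power_mult_nth power_add[symmetric] mult.assoc[symmetric] diff_diff_add)

lemma rhs_eq:
  fixes A B :: "int fps fps"
  shows "(1 + fps_X * qvar ^ r + fps_X * qvar ^ (d - r)) * A + fps_X * qvar ^ d * (1 - fps_X * qvar ^ d) * B
   = A + fps_X * (qvar ^ r * A) + fps_X * (qvar ^ (d - r) * A) + fps_X * (qvar ^ d * B) - fps_X * (fps_X * (qvar ^ (2 * d) * B))"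
  unfolding mult_2 power_add by (simp add: algebra_simps del: fps_const_power)

theorem proposition2p1:
  fixes d r :: nat
  assumes "d \<ge> 3" and "1 \<le> r" and "2 * r < d"
  shows "f_dr d r =
    (1 + fps_X * qvar ^ r + fps_X * qvar ^ (d - r)) * x_scale d (f_dr d r)
    + fps_X * qvar ^ d * (1 - fps_X * qvar ^ d) * x_scale (2 * d) (f_dr d r)"
  unfolding rhs_eq
proof (intro fps_ext)
  fix n m
  show "f_dr d r $ n $ m = (x_scale d (f_dr d r) + fps_X * (qvar ^ r * x_scale d (f_dr d r)) +
          fps_X * (qvar ^ (d - r) * x_scale d (f_dr d r)) + fps_X * (qvar ^ d * x_scale (2 * d) (f_dr d r)) -
          fps_X * (fps_X * (qvar ^ (2 * d) * x_scale (2 * d) (f_dr d r)))) $ n $ m"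
    apply (simp only: fps_add_nth fps_sub_nth fps_X_mult_nth fps_const_power if_nth fps_zero_nth)
    apply (simp only: cxs_nth xs_nth f_nth)
    using key[OF assms, of n m] by (simp add: mult.assoc)
qed

end
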